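(* Let $c_n$ be the number of equivalence classes of $n$-diagrams under the action of the cyclic group $C_{2n}$ of order $2n$ generated by the rotation $j\mapsto j+1\pmod{2n}$ of $[2n]$. Then $c_n\ge \underline{c}_n := (2n)^{-1}(2n-1)!!$ for $n\ge1$, and \[ c_n \sim \frac{(2n-1)!!}{2n} \quad \text{as } n\to\infty. \]
   Context: A chord diagram of order $n$ (an $n$-diagram) is a 3-regular graph on vertex set $[2n]=\{1,\dots,2n\}$ containing the $2n$-circuit $\Delta_{2n}=(1\,2\,\dots\,2n)$ as a subgraph; the edges not in $\Delta_{2n}$ are the chords (they form a perfect matching of $[2n]$). Given a group $G$ of permutations of $[2n]$ acting on $\Delta_{2n}$, two $n$-diagrams are equivalent if some $g\in G$ takes the chords of the first onto the chords of the second. *)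

theory Defs
  imports Main "HOL-Library.Landau_Symbols"
begin

definition chord_sets :: "nat \<Rightarrow> nat set set set" where
  "chord_sets n = {M. (\<forall>e\<in>M. e \<subseteq> {1..2*n} \<and> card e = 2)
                    \<and> (\<forall>e\<in>M. \<forall>f\<in>M. e \<noteq> f \<longrightarrow> e \<inter> f = {})
                    \<and> \<Union>M = {1..2*n}}"

definition rot :: "nat \<Rightarrow> nat \<Rightarrow> nat" where
  "rot n j = j mod (2*n) + 1"

definition cyc_equiv :: "nat \<Rightarrow> (nat set set \<times> nat set set) set" where
  "cyc_equiv n = {(M, N). M \<in> chord_sets n \<and> N \<in> chord_sets n \<and>
      (\<exists>k::nat. (\<lambda>e. ((rot n) ^^ k) ` e) ` M = N)}"

definition c_num :: "nat \<Rightarrow> nat" where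
  "c_num n = card (chord_sets n // cyc_equiv n)"

definition odd_dfact :: "nat \<Rightarrow> nat" where
  "odd_dfact n = (\<Prod>i\<in>{1..n}. 2*i - 1)"

end

theory Submission
  imports Defs "HOL-Library.FuncSet"
begin

definition match :: "'a set \<Rightarrow> 'a set set set" where
  "match S = {M. (\<forall>e\<in>M. e \<subseteq> S \<and> card e = 2)
                    \<and> (\<forall>e\<in>M. \<forall>f\<in>M. e \<noteq> f \<longrightarrow> e \<inter> f = {})
                    \<and> \<Union>M = S}"

lemma chord_sets_match: "chord_sets n = match {1..2*n}"
  unfolding chord_sets_def match_def by simp

lemma finite_match: "finite S \<Longrightarrow> finite (match S)"
  by (rule finite_subset[of _ "Pow (Pow S)"]) (auto simp: match_def)

lemma match_sub: "M \<in> match S \<Longrightarrow> e \<in> M \<Longrightarrow> e \<subseteq> S"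
  unfolding match_def by blast

lemma match_card: "M \<in> match S \<Longrightarrow> e \<in> M \<Longrightarrow> card e = 2"
  unfolding match_def by blast

lemma match_disj: "M \<in> match S \<Longrightarrow> e \<in> M \<Longrightarrow> f \<in> M \<Longrightarrow> e \<noteq> f \<Longrightarrow> e \<inter> f = {}"
  unfolding match_def by blast

lemma match_Un: "M \<in> match S \<Longrightarrow> \<Union>M = S"
  unfolding match_def by blast

definition partner :: "'a set set \<Rightarrow> 'a \<Rightarrow> 'a" where
  "partner M x = (THE y. {x,y} \<in> M)"

lemma match_uniq:
  assumes "M \<in> match S" "{x,y} \<in> M" "{x,z} \<in> M" shows "y = z"
proof -
  have "{x,y} = {x,z}" using match_disj[OF assms(1) assms(2,3)] by blast
  then show ?thesis by (metis doubleton_eq_iff)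
qed

lemma partner_eq: "M \<in> match S \<Longrightarrow> {x,y} \<in> M \<Longrightarrow> partner M x = y"
  unfolding partner_def by (rule the_equality) (assumption, metis match_uniq)

lemma partner_ex:
  assumes "M \<in> match S" "x \<in> S"
  shows "{x, partner M x} \<in> M \<and> partner M x \<in> S \<and> partner M x \<noteq> x"
proof -
  from assms obtain e where e: "e \<in> M" "x \<in> e" using match_Un by blast
  then have "card e = 2" "e \<subseteq> S" using assms match_sub match_card by auto
  then obtain a b where ab: "a \<noteq> b" "e = {a,b}" by (meson card_2_iff)
  then obtain y where y: "e = {x,y}" "y \<noteq> x" using e by blast
  then have "partner M x = y" using partner_eq assms e by metis
  then show ?thesis using y e \<open>e \<subseteq> S\<close> by blast
qed

lemma match_remove:
  assumes "M \<in> match S" "{x,y} \<in> M"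
  shows "M - {{x,y}} \<in> match (S - {x,y})"
proof -
  have d: "\<forall>e\<in>M. e \<noteq> {x,y} \<longrightarrow> e \<inter> {x,y} = {}" using assms match_disj by blast
  show ?thesis unfolding match_def
  proof (intro CollectI conjI ballI impI)
    fix e assume "e \<in> M - {{x,y}}"
    then show "e \<subseteq> S - {x,y}" "card e = 2" using d match_sub[OF assms(1)] match_card[OF assms(1)] by auto
  next
    fix e f assume "e \<in> M - {{x,y}}" "f \<in> M - {{x,y}}" "e \<noteq> f"
    then show "e \<inter> f = {}" using match_disj[OF assms(1)] by auto
  next
    show "\<Union>(M - {{x,y}}) = S - {x,y}"
    proof
      show "\<Union>(M - {{x,y}}) \<subseteq> S - {x,y}" using d match_sub[OF assms(1)] by auto
      show "S - {x,y} \<subseteq> \<Union>(M - {{x,y}})" using match_Un[OF assms(1)] by auto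
    qed
  qed
qed

lemma match_insert:
  assumes "M \<in> match (S - {x,y})" "x \<in> S" "y \<in> S" "x \<noteq> y"
  shows "insert {x,y} M \<in> match S"
  using assms unfolding match_def by auto

lemma match_empty: "match {} = {{}}"
  unfolding match_def by auto

lemma odd_dfact_Suc: "odd_dfact (Suc r) = (2*r+1) * odd_dfact r"
  unfolding odd_dfact_def by (simp add: prod.nat_ivl_Suc')

lemma card_match: "finite S \<Longrightarrow> card S = 2*r \<Longrightarrow> card (match S) = odd_dfact r"
proof (induction r arbitrary: S)
  case 0
  then show ?case by (simp add: match_empty odd_dfact_def)
next
  case (Suc r)
  then obtain x where x: "x \<in> S" by fastforce
  have eq: "match S = (\<Union>y\<in>S-{x}. insert {x,y} ` match (S - {x,y}))"
  proof
    show "match S \<subseteq> (\<Union>y\<in>S-{x}. insert {x,y} ` match (S - {x,y}))"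
    proof
      fix M assume M: "M \<in> match S"
      let ?y = "partner M x"
      have p: "{x, ?y} \<in> M" "?y \<in> S" "?y \<noteq> x" using partner_ex[OF M x] by auto
      have "M = insert {x,?y} (M - {{x,?y}})" using p by auto
      then show "M \<in> (\<Union>y\<in>S-{x}. insert {x,y} ` match (S - {x,y}))"
        using match_remove[OF M p(1)] p by blast
    qed
  next
    show "(\<Union>y\<in>S-{x}. insert {x,y} ` match (S - {x,y})) \<subseteq> match S"
    proof
      fix M assume "M \<in> (\<Union>y\<in>S-{x}. insert {x,y} ` match (S - {x,y}))"
      then obtain y M' where "y \<in> S - {x}" "M' \<in> match (S - {x,y})" "M = insert {x,y} M'" by blast
      then show "M \<in> match S" using match_insert[of M' S x y] x by auto
    qed
  qed
  have "card (match S) = (\<Sum>y\<in>S-{x}. card (insert {x,y} ` match (S - {x,y})))"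
    unfolding eq
  proof (rule card_UN_disjoint)
    show "finite (S - {x})" using Suc by auto
    show "\<forall>i\<in>S - {x}. finite (insert {x, i} ` match (S - {x, i}))"
      using Suc by (auto intro: finite_match)
    show "\<forall>i\<in>S - {x}. \<forall>j\<in>S - {x}. i \<noteq> j \<longrightarrow>
       insert {x, i} ` match (S - {x, i}) \<inter> insert {x, j} ` match (S - {x, j}) = {}"
    proof (intro ballI impI)
      fix i j assume ij: "i \<in> S - {x}" "j \<in> S - {x}" "i \<noteq> j"
      show "insert {x, i} ` match (S - {x, i}) \<inter> insert {x, j} ` match (S - {x, j}) = {}"
      proof (rule ccontr)
        assume "\<not> ?thesis"
        then obtain A B where AB: "A \<in> match (S - {x, i})" "B \<in> match (S - {x, j})"
          "insert {x,i} A = insert {x,j} B" by blast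
        then have "{x,j} \<in> insert {x,i} A" by auto
        moreover have "{x,j} \<noteq> {x,i}" using ij by (metis doubleton_eq_iff)
        ultimately have "{x,j} \<in> A" by auto
        then show False using match_sub[OF AB(1)] by blast
      qed
    qed
  qed
  also have "\<dots> = (\<Sum>y\<in>S-{x}. odd_dfact r)"
  proof (rule sum.cong[OF refl])
    fix y assume y: "y \<in> S - {x}"
    have inj: "inj_on (insert {x,y}) (match (S - {x, y}))"
    proof (rule inj_onI)
      fix A B assume AB: "A \<in> match (S - {x, y})" "B \<in> match (S - {x, y})" "insert {x,y} A = insert {x,y} B"
      have "{x,y} \<notin> A" "{x,y} \<notin> B" using match_sub[OF AB(1)] match_sub[OF AB(2)] by blast+
      then show "A = B" using AB(3) by (metis insert_ident)
    qed
    have c2: "card {x,y} = 2" using y by auto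
    have "card (S - {x,y}) = 2*r" using Suc.prems y x c2 by (simp add: card_Diff_subset)
    then show "card (insert {x, y} ` match (S - {x, y})) = odd_dfact r"
      using card_image[OF inj] Suc.IH[of "S - {x,y}"] Suc.prems by auto
  qed
  also have "\<dots> = (2*r+1) * odd_dfact r" using Suc.prems x by simp
  finally show ?case by (simp add: odd_dfact_Suc)
qed

definition good :: "('a \<Rightarrow> 'a) \<Rightarrow> 'a set \<Rightarrow> bool" where
  "good \<sigma> S = (\<forall>x\<in>S. \<sigma> x \<in> S \<and> \<sigma> x \<noteq> x \<and> \<sigma> (\<sigma> x) = x)"

definition fixi :: "('a \<Rightarrow> 'a) \<Rightarrow> 'a set \<Rightarrow> 'a set set set" where
  "fixi \<sigma> S = {M \<in> match S. (\<lambda>e. \<sigma> ` e) ` M = M}"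

lemma good_D: "good \<sigma> S \<Longrightarrow> x \<in> S \<Longrightarrow> \<sigma> x \<in> S \<and> \<sigma> x \<noteq> x \<and> \<sigma> (\<sigma> x) = x"
  unfolding good_def by blast

lemma good_diff: "good \<sigma> S \<Longrightarrow> (\<forall>z\<in>T. \<sigma> z \<in> T) \<Longrightarrow> good \<sigma> (S - T)"
  unfolding good_def
proof (intro ballI conjI)
  fix x assume a: "\<forall>x\<in>S. \<sigma> x \<in> S \<and> \<sigma> x \<noteq> x \<and> \<sigma> (\<sigma> x) = x" "\<forall>z\<in>T. \<sigma> z \<in> T" "x \<in> S - T"
  then have x: "x \<in> S" "x \<notin> T" by blast+
  then have "\<sigma> x \<in> S \<and> \<sigma> x \<noteq> x \<and> \<sigma> (\<sigma> x) = x" using a(1) by blast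
  then have "\<sigma> x \<in> S" "\<sigma> x \<noteq> x" "\<sigma> (\<sigma> x) = x" by blast+
  moreover have "\<sigma> x \<notin> T"
  proof
    assume "\<sigma> x \<in> T" then have "\<sigma> (\<sigma> x) \<in> T" using a(2) by blast
    then show False using x \<open>\<sigma> (\<sigma> x) = x\<close> by simp
  qed
  ultimately show "\<sigma> x \<in> S - T" "\<sigma> x \<noteq> x" "\<sigma> (\<sigma> x) = x" by blast+
qed

lemma good_inj: "good \<sigma> S \<Longrightarrow> inj_on \<sigma> S"
  unfolding good_def inj_on_def
proof (intro ballI impI)
  fix x y assume a: "\<forall>x\<in>S. \<sigma> x \<in> S \<and> \<sigma> x \<noteq> x \<and> \<sigma> (\<sigma> x) = x" "x \<in> S" "y \<in> S" "\<sigma> x = \<sigma> y"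
  then have "\<sigma> (\<sigma> x) = x" "\<sigma> (\<sigma> y) = y" by blast+
  then show "x = y" using a(4) by metis
qed

lemma fixi_diff:
  assumes g: "good \<sigma> S" and M: "M \<in> match S" and inv: "(\<lambda>e. \<sigma> ` e) ` M = M"
    and E: "E \<subseteq> M" and invE: "(\<lambda>e. \<sigma> ` e) ` E = E"
  shows "(\<lambda>e. \<sigma> ` e) ` (M - E) = M - E"
proof -
  have "inj_on (\<lambda>e. \<sigma> ` e) (Pow S)" using inj_on_image_Pow[OF good_inj[OF g]] by simp
  moreover have "M \<subseteq> Pow S" using match_sub[OF M] by blast
  ultimately have "(\<lambda>e. \<sigma> ` e) ` (M - E) = (\<lambda>e. \<sigma> ` e) ` M - (\<lambda>e. \<sigma> ` e) ` E"
    using E by (intro inj_on_image_set_diff) blast+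
  then show ?thesis using inv invE by simp
qed

lemma finite_fixi: "finite S \<Longrightarrow> finite (fixi \<sigma> S)"
  unfolding fixi_def by (rule finite_subset[OF _ finite_match]) auto

lemma bound_step:
  fixes k :: nat
  shows "2^(k+1) * sqrt (fact (k+1)) + (2*k+2) * (2^k * sqrt (fact k)) \<le> (2::real)^(k+2) * sqrt (fact (k+2))"
proof -
  define s where "s = sqrt (fact k :: real)"
  define a where "a = sqrt (real k + 1)"
  define b where "b = sqrt (real k + 2)"
  have s0: "s \<ge> 0" unfolding s_def by simp
  have a1: "a \<ge> 1" unfolding a_def by simp
  have ba: "b \<ge> a" unfolding a_def b_def by simp
  have f1: "sqrt (fact (k+1)) = a * s" unfolding a_def s_def
    by (simp add: real_sqrt_mult add.commute fact_Suc)
  have f2: "sqrt (fact (k+2)) = b * a * s" unfolding a_def b_def s_def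
    by (simp add: real_sqrt_mult add.commute mult.assoc fact_Suc)
  have aa: "a * a = real k + 1" unfolding a_def by simp
  have "2 * a + 2 * (a*a) \<le> 4 * (b * a)"
  proof -
    have "b \<ge> 1" using a1 ba by linarith
    then have "1 * a \<le> b * a" using a1 by (intro mult_right_mono) auto
    then have "a \<le> b * a" by simp
    moreover have "a * a \<le> b * a" using ba a1 by (simp add: mult_right_mono)
    ultimately show ?thesis by linarith
  qed
  then have "(2 * a + 2 * (a*a)) * (2^k * s) \<le> (4 * (b * a)) * (2^k * s)"
    using s0 by (intro mult_right_mono) auto
  then show ?thesis unfolding f1 f2 using aa by (simp add: algebra_simps s_def)
qed

lemma fixi_bound:
  "finite S \<Longrightarrow> good \<sigma> S \<Longrightarrow> card S = 2*r \<Longrightarrow> real (card (fixi \<sigma> S)) \<le> 2^r * sqrt (fact r)"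
proof (induction r arbitrary: S rule: less_induct)
  case (less r)
  show ?case
  proof (cases "r = 0")
    case True
    then have "S = {}" using less.prems by auto
    then have "fixi \<sigma> S \<subseteq> {{}}" unfolding fixi_def by (auto simp: match_empty)
    then have "card (fixi \<sigma> S) \<le> card {{}::'a set set}" by (intro card_mono) auto
    then have "card (fixi \<sigma> S) \<le> 1" by simp
    then show ?thesis using True by simp
  next
    case False
    then obtain x where x: "x \<in> S" using less.prems by fastforce
    have g: "good \<sigma> S" by fact
    have sx: "\<sigma> x \<in> S" "\<sigma> x \<noteq> x" "\<sigma> (\<sigma> x) = x" using good_D[OF g x] by blast+
    let ?S1 = "S - {x, \<sigma> x}"
    let ?S2 = "\<lambda>y. S - {x, y, \<sigma> x, \<sigma> y}"
    let ?A = "insert {x, \<sigma> x} ` fixi \<sigma> ?S1"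
    let ?B = "\<Union>y\<in>?S1. (\<lambda>M'. insert {x,y} (insert {\<sigma> x, \<sigma> y} M')) ` fixi \<sigma> (?S2 y)"
    have sub: "fixi \<sigma> S \<subseteq> ?A \<union> ?B"
    proof
      fix M assume MF: "M \<in> fixi \<sigma> S"
      then have M: "M \<in> match S" and inv: "(\<lambda>e. \<sigma> ` e) ` M = M" unfolding fixi_def by auto
      let ?y = "partner M x"
      have p: "{x, ?y} \<in> M" "?y \<in> S" "?y \<noteq> x" using partner_ex[OF M x] by auto
      show "M \<in> ?A \<union> ?B"
      proof (cases "?y = \<sigma> x")
        case True
        have M1: "M - {{x, \<sigma> x}} \<in> match ?S1" using match_remove[OF M] p True by simp
        have "(\<lambda>e. \<sigma> ` e) ` (M - {{x, \<sigma> x}}) = M - {{x, \<sigma> x}}"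
          using fixi_diff[OF g M inv, of "{{x, \<sigma> x}}"] p True sx by auto
        then have "M - {{x, \<sigma> x}} \<in> fixi \<sigma> ?S1" using M1 unfolding fixi_def by auto
        moreover have "M = insert {x, \<sigma> x} (M - {{x, \<sigma> x}})" using p True by auto
        ultimately show ?thesis by blast
      next
        case False
        define y where "y = ?y"
        have y: "{x,y} \<in> M" "y \<in> S" "y \<noteq> x" "y \<noteq> \<sigma> x" using p False unfolding y_def by auto
        have sy: "\<sigma> y \<in> S" "\<sigma> y \<noteq> y" "\<sigma> (\<sigma> y) = y" using good_D[OF g, of y] y by blast+
        have sxy: "\<sigma> y \<noteq> x" "\<sigma> y \<noteq> \<sigma> x" using sy y sx by metis+
        have "(\<lambda>e. \<sigma> ` e) {x,y} \<in> M" using inv y by (metis image_eqI)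
        then have m2: "{\<sigma> x, \<sigma> y} \<in> M" by simp
        have M1: "M - {{x,y}} \<in> match (S - {x,y})" using match_remove[OF M y(1)] .
        have ne: "{\<sigma> x, \<sigma> y} \<noteq> {x,y}" using sx y by (metis doubleton_eq_iff)
        have M2: "M - {{x,y}} - {{\<sigma> x, \<sigma> y}} \<in> match (S - {x,y} - {\<sigma> x, \<sigma> y})"
          using match_remove[OF M1] m2 ne by simp
        have eqM: "M - {{x,y}} - {{\<sigma> x, \<sigma> y}} = M - {{x,y}, {\<sigma> x, \<sigma> y}}" by auto
        have eqS: "S - {x,y} - {\<sigma> x, \<sigma> y} = ?S2 y" by auto
        have invE: "(\<lambda>e. \<sigma> ` e) ` {{x,y}, {\<sigma> x, \<sigma> y}} = {{x,y}, {\<sigma> x, \<sigma> y}}"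
          using sx sy by auto
        have "(\<lambda>e. \<sigma> ` e) ` (M - {{x,y}, {\<sigma> x, \<sigma> y}}) = M - {{x,y}, {\<sigma> x, \<sigma> y}}"
          using fixi_diff[OF g M inv _ invE] y m2 by auto
        then have F: "M - {{x,y}, {\<sigma> x, \<sigma> y}} \<in> fixi \<sigma> (?S2 y)"
          using M2 eqM eqS unfolding fixi_def by auto
        have "M = insert {x,y} (insert {\<sigma> x, \<sigma> y} (M - {{x,y}, {\<sigma> x, \<sigma> y}}))"
          using y m2 by auto
        moreover have "y \<in> ?S1" using y by auto
        ultimately show ?thesis using F by blast
      qed
    qed
    have finS: "finite S" by fact
    have cS1: "card ?S1 = 2*(r-1)"
      using less.prems sx x by (simp add: card_Diff_subset)
    have "card (fixi \<sigma> S) \<le> card (?A \<union> ?B)"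
      using sub finS by (intro card_mono) (auto intro!: finite_fixi)
    also have "\<dots> \<le> card ?A + card ?B" by (rule card_Un_le)
    also have "\<dots> \<le> card (fixi \<sigma> ?S1) + (\<Sum>y\<in>?S1. card (fixi \<sigma> (?S2 y)))"
    proof (intro add_mono card_image_le finite_fixi)
      show "finite ?S1" using finS by auto
      have "card ?B \<le> (\<Sum>y\<in>?S1. card ((\<lambda>M'. insert {x,y} (insert {\<sigma> x, \<sigma> y} M')) ` fixi \<sigma> (?S2 y)))"
        using finS by (intro card_UN_le) auto
      also have "\<dots> \<le> (\<Sum>y\<in>?S1. card (fixi \<sigma> (?S2 y)))"
        using finS by (intro sum_mono card_image_le finite_fixi) auto
      finally show "card ?B \<le> (\<Sum>y\<in>?S1. card (fixi \<sigma> (?S2 y)))" .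
    qed
    finally have leN: "card (fixi \<sigma> S) \<le> card (fixi \<sigma> ?S1) + (\<Sum>y\<in>?S1. card (fixi \<sigma> (?S2 y)))" .
    have le1: "real (card (fixi \<sigma> S)) \<le> real (card (fixi \<sigma> ?S1)) + (\<Sum>y\<in>?S1. real (card (fixi \<sigma> (?S2 y))))"
      using of_nat_mono[OF leN, where 'a=real] by simp
    have g1: "good \<sigma> ?S1" using good_diff[OF g, of "{x, \<sigma> x}"] sx by auto
    have IH1: "real (card (fixi \<sigma> ?S1)) \<le> 2^(r-1) * sqrt (fact (r-1))"
      using less.IH[of "r-1" ?S1] g1 cS1 finS False by auto
    show ?thesis
    proof (cases "r = 1")
      case True
      then have e: "?S1 = {}" using cS1 finS by auto
      have "real (card (fixi \<sigma> S)) \<le> real (card (fixi \<sigma> ?S1))" using le1 unfolding e by simp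
      then have "real (card (fixi \<sigma> S)) \<le> 1" using IH1 True by simp
      then show ?thesis using True by simp
    next
      case r2: False
      have "(\<Sum>y\<in>?S1. real (card (fixi \<sigma> (?S2 y)))) \<le> (\<Sum>y\<in>?S1. 2^(r-2) * sqrt (fact (r-2)))"
      proof (rule sum_mono)
        fix y assume y: "y \<in> ?S1"
        have yy: "y \<in> S" "y \<noteq> x" "y \<noteq> \<sigma> x" using y by auto
        have sy: "\<sigma> y \<in> S" "\<sigma> y \<noteq> y" "\<sigma> (\<sigma> y) = y" using good_D[OF g, of y] yy by blast+
        have sxy: "\<sigma> y \<noteq> x" "\<sigma> y \<noteq> \<sigma> x" using sy yy sx by metis+
        have c4: "card {x, y, \<sigma> x, \<sigma> y} = 4" using y sx sy sxy by auto
        have "card (?S2 y) = 2*(r-2)"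
          using less.prems sx x y sy c4 by (simp add: card_Diff_subset)
        moreover have "good \<sigma> (?S2 y)" using good_diff[OF g, of "{x, y, \<sigma> x, \<sigma> y}"] sx sy by auto
        ultimately show "real (card (fixi \<sigma> (?S2 y))) \<le> 2^(r-2) * sqrt (fact (r-2))"
          using less.IH[of "r-2" "?S2 y"] finS False r2 by auto
      qed
      also have "\<dots> = (2 * real (r-2) + 2) * (2^(r-2) * sqrt (fact (r-2)))"
        using cS1 False r2 by simp
      finally have le2: "(\<Sum>y\<in>?S1. real (card (fixi \<sigma> (?S2 y)))) \<le> (2 * real (r-2) + 2) * (2^(r-2) * sqrt (fact (r-2)))" .
      have rr: "r - 1 = r - 2 + 1" using False r2 by simp
      have "real (card (fixi \<sigma> S)) \<le> 2^(r-2+1) * sqrt (fact (r-2+1)) + (2 * real (r-2) + 2) * (2^(r-2) * sqrt (fact (r-2)))"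
        using le1 IH1 le2 unfolding rr by linarith
      also have "\<dots> \<le> 2^(r-2+2) * sqrt (fact (r-2+2))" using bound_step[of "r-2"] by (simp add: add.commute)
      finally have fin: "real (card (fixi \<sigma> S)) \<le> 2^(r-2+2) * sqrt (fact (r-2+2))" .
      have rr2: "r - 2 + 2 = r" using False r2 by simp
      show ?thesis using fin unfolding rr2 .
    qed
  qed
qed

definition RR :: "nat \<Rightarrow> nat \<Rightarrow> nat set set \<Rightarrow> nat set set" where
  "RR n k M = (\<lambda>e. (rot n ^^ k) ` e) ` M"

lemma rot_pow:
  assumes n: "0 < n" and x: "x \<in> {1..2*n}"
  shows "(rot n ^^ k) x = (x - 1 + k) mod (2*n) + 1"
proof (induction k)
  case 0
  have "x - 1 < 2*n" using x by auto
  then show ?case using x by simp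
next
  case (Suc k)
  have "(rot n ^^ Suc k) x = rot n ((rot n ^^ k) x)" by simp
  also have "\<dots> = ((x - 1 + k) mod (2*n) + 1) mod (2*n) + 1" unfolding Suc rot_def ..
  also have "\<dots> = (x - 1 + Suc k) mod (2*n) + 1" by (simp add: mod_Suc_eq)
  finally show ?case .
qed

lemma rot_pow_in: "0 < n \<Longrightarrow> x \<in> {1..2*n} \<Longrightarrow> (rot n ^^ k) x \<in> {1..2*n}"
  using rot_pow[of n x k] by (simp add: Suc_leI)

lemma rot_pow_mod: "0 < n \<Longrightarrow> x \<in> {1..2*n} \<Longrightarrow> (rot n ^^ k) x = (rot n ^^ (k mod (2*n))) x"
proof -
  assume n: "0 < n" and x: "x \<in> {1..2*n}"
  have "(x - 1 + k) mod (2*n) = (x - 1 + k mod (2*n)) mod (2*n)" by (rule mod_add_right_eq[symmetric])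
  then show ?thesis using rot_pow[OF n x, of k] rot_pow[OF n x, of "k mod (2*n)"] by simp
qed

lemma rot_pow_add: "(rot n ^^ (a + b)) x = (rot n ^^ a) ((rot n ^^ b) x)"
  by (simp add: funpow_add)

lemma rot_pow_period: "0 < n \<Longrightarrow> x \<in> {1..2*n} \<Longrightarrow> (2*n) dvd k \<Longrightarrow> (rot n ^^ k) x = x"
  using rot_pow_mod[of n x k] by simp

lemma rot_pow_bij: assumes n: "0 < n" shows "bij_betw (rot n ^^ k) {1..2*n} {1..2*n}"
proof -
  let ?A = "{1..2*n}"
  define j where "j = 2*n - k mod (2*n)"
  have dv: "(2*n) dvd (j + k)" "(2*n) dvd (k + j)"
  proof -
    define q where "q = k div (2*n)"
    define r where "r = k mod (2*n)"
    have hr: "r < 2*n" using n unfolding r_def by simp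
    have hk: "k = 2*n*q + r" unfolding q_def r_def by simp
    have hj: "j = 2*n - r" unfolding j_def r_def ..
    have e: "2*n*(q+1) = 2*n*q + 2*n" by simp
    have "j + k = 2*n*(q+1)" using hr hk hj e by linarith
    then show "(2*n) dvd (j + k)" by simp
    then show "(2*n) dvd (k + j)" by (simp add: add.commute)
  qed
  have inv1: "(rot n ^^ j) ((rot n ^^ k) x) = x" if "x \<in> ?A" for x
    using rot_pow_period[OF n that dv(1)] rot_pow_add[where n=n and a=j and b=k and x=x] by simp
  have inv2: "(rot n ^^ k) ((rot n ^^ j) x) = x" if "x \<in> ?A" for x
    using rot_pow_period[OF n that dv(2)] rot_pow_add[where n=n and a=k and b=j and x=x] by simp
  show ?thesis
  proof (rule bij_betw_byWitness[where f' = "rot n ^^ j"])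
    show "\<forall>a\<in>?A. (rot n ^^ j) ((rot n ^^ k) a) = a" using inv1 by blast
    show "\<forall>a'\<in>?A. (rot n ^^ k) ((rot n ^^ j) a') = a'" using inv2 by blast
    show "(rot n ^^ k) ` ?A \<subseteq> ?A" using rot_pow_in[OF n] by blast
    show "(rot n ^^ j) ` ?A \<subseteq> ?A" using rot_pow_in[OF n] by blast
  qed
qed

lemma match_bij:
  assumes f: "bij_betw f S S" and M: "M \<in> match S"
  shows "(\<lambda>e. f ` e) ` M \<in> match S"
proof -
  have inj: "inj_on f S" using f bij_betw_def by blast
  show ?thesis unfolding match_def
  proof (intro CollectI conjI ballI impI)
    fix e' assume "e' \<in> (\<lambda>e. f ` e) ` M"
    then obtain e where e: "e \<in> M" "e' = f ` e" by blast
    have es: "e \<subseteq> S" using match_sub[OF M e(1)] .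
    then show "e' \<subseteq> S" using e f bij_betw_imp_surj_on by blast
    have "card (f ` e) = card e" using inj es by (meson card_image inj_on_subset)
    then show "card e' = 2" using e match_card[OF M e(1)] by simp
  next
    fix e' f' assume a: "e' \<in> (\<lambda>e. f ` e) ` M" "f' \<in> (\<lambda>e. f ` e) ` M" "e' \<noteq> f'"
    then obtain e1 e2 where e: "e1 \<in> M" "e' = f ` e1" "e2 \<in> M" "f' = f ` e2" by blast
    then have "e1 \<noteq> e2" using a(3) by blast
    then have "e1 \<inter> e2 = {}" using match_disj[OF M e(1) e(3)] by blast
    moreover have "f ` (e1 \<inter> e2) = f ` e1 \<inter> f ` e2"
      using inj match_sub[OF M e(1)] match_sub[OF M e(3)] by (intro inj_on_image_Int) auto
    ultimately show "e' \<inter> f' = {}" using e by simp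
  next
    have "\<Union>((\<lambda>e. f ` e) ` M) = f ` \<Union>M" by blast
    also have "\<dots> = f ` S" using match_Un[OF M] by simp
    also have "\<dots> = S" using f bij_betw_imp_surj_on by blast
    finally show "\<Union>((\<lambda>e. f ` e) ` M) = S" .
  qed
qed

lemma RR_cs: "0 < n \<Longrightarrow> M \<in> chord_sets n \<Longrightarrow> RR n k M \<in> chord_sets n"
  unfolding chord_sets_match RR_def using match_bij rot_pow_bij by blast

lemma RR_add: "RR n (a + b) M = RR n a (RR n b M)"
  unfolding RR_def by (simp add: funpow_add image_image image_comp)

lemma RR_0: "RR n 0 M = M"
  unfolding RR_def by simp

lemma RR_mod:
  assumes n: "0 < n" and M: "M \<in> chord_sets n"
  shows "RR n k M = RR n (k mod (2*n)) M"
proof -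
  have "(rot n ^^ k) ` e = (rot n ^^ (k mod (2*n))) ` e" if "e \<in> M" for e
  proof (rule image_cong[OF refl])
    fix x assume "x \<in> e"
    then have "x \<in> {1..2*n}" using match_sub[OF M[unfolded chord_sets_match] that] by blast
    then show "(rot n ^^ k) x = (rot n ^^ (k mod (2*n))) x" using rot_pow_mod[OF n] by blast
  qed
  then show ?thesis unfolding RR_def by (rule image_cong[OF refl])
qed

lemma RR_period: "0 < n \<Longrightarrow> M \<in> chord_sets n \<Longrightarrow> (2*n) dvd k \<Longrightarrow> RR n k M = M"
  using RR_mod[of n M k] by (simp add: RR_0)

lemma RR_iter: "RR n t M = M \<Longrightarrow> RR n (t * x) M = M"
proof (induction x)
  case 0 then show ?case by (simp add: RR_0)
next
  case (Suc x)
  have "RR n (t * Suc x) M = RR n t (RR n (t*x) M)" by (simp add: RR_add[symmetric] add.commute)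
  then show ?case using Suc by simp
qed

lemma RR_comm: "RR n a (RR n b M) = RR n b (RR n a M)"
  by (simp add: RR_add[symmetric] add.commute)

definition bad :: "nat \<Rightarrow> nat set set set" where
  "bad n = {M \<in> chord_sets n. \<exists>t. 0 < t \<and> t < 2*n \<and> RR n t M = M}"

lemma cyc_equiv_iff: "(M, N) \<in> cyc_equiv n \<longleftrightarrow> M \<in> chord_sets n \<and> N \<in> chord_sets n \<and> (\<exists>k. RR n k M = N)"
  unfolding cyc_equiv_def RR_def by simp

lemma finite_cs: "finite (chord_sets n)"
  unfolding chord_sets_match by (rule finite_match) simp

lemma card_cs: "card (chord_sets n) = odd_dfact n"
  unfolding chord_sets_match by (rule card_match) simp_all

context fixes n :: nat assumes n: "0 < n"
begin

lemma class_eq: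
  assumes M: "M \<in> chord_sets n"
  shows "cyc_equiv n `` {M} = (\<lambda>k. RR n k M) ` {..<2*n}"
proof
  show "cyc_equiv n `` {M} \<subseteq> (\<lambda>k. RR n k M) ` {..<2*n}"
  proof
    fix N assume "N \<in> cyc_equiv n `` {M}"
    then obtain k where k: "RR n k M = N" using cyc_equiv_iff by blast
    then have "N = RR n (k mod (2*n)) M" using RR_mod[OF n M] by simp
    moreover have "k mod (2*n) < 2*n" using n by simp
    ultimately show "N \<in> (\<lambda>k. RR n k M) ` {..<2*n}" by blast
  qed
  show "(\<lambda>k. RR n k M) ` {..<2*n} \<subseteq> cyc_equiv n `` {M}"
    using M RR_cs[OF n M] cyc_equiv_iff by blast
qed

lemma equiv_cyc: "equiv (chord_sets n) (cyc_equiv n)"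
proof (rule equivI)
  show "cyc_equiv n \<subseteq> chord_sets n \<times> chord_sets n" unfolding cyc_equiv_def by blast
  show "refl_on (chord_sets n) (cyc_equiv n)"
    unfolding refl_on_def
  proof
    fix M assume "M \<in> chord_sets n"
    then show "(M, M) \<in> cyc_equiv n" unfolding cyc_equiv_iff using RR_0 by blast
  qed
  show "sym (cyc_equiv n)"
  proof (rule symI)
    fix M N assume "(M, N) \<in> cyc_equiv n"
    then obtain k where M: "M \<in> chord_sets n" and N: "N \<in> chord_sets n" and k: "RR n k M = N"
      using cyc_equiv_iff by blast
    have "RR n ((2*n-1)*k) N = RR n ((2*n-1)*k + k) M" using k RR_add[where n=n and a="(2*n-1)*k" and b=k and M=M] by simp
    also have "\<dots> = M"
    proof (rule RR_period[OF n M])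
      have "(2*n-1)*k + k = Suc (2*n-1) * k" by simp
      also have "Suc (2*n-1) = 2*n" using n by simp
      finally have "(2*n-1)*k + k = 2*n*k" .
      then show "2 * n dvd (2*n-1)*k + k" by simp
    qed
    finally show "(N, M) \<in> cyc_equiv n" using M N cyc_equiv_iff by blast
  qed
  show "trans (cyc_equiv n)"
  proof (rule transI)
    fix M N P assume "(M, N) \<in> cyc_equiv n" "(N, P) \<in> cyc_equiv n"
    then have "M \<in> chord_sets n" "P \<in> chord_sets n" "\<exists>k. RR n k M = N" "\<exists>l. RR n l N = P"
      unfolding cyc_equiv_iff by blast+
    then obtain k l where kl: "M \<in> chord_sets n" "P \<in> chord_sets n" "RR n k M = N" "RR n l N = P"
      by blast
    have "RR n (l + k) M = RR n l (RR n k M)" by (rule RR_add)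
    then have "RR n (l + k) M = P" using kl(3,4) by simp
    then show "(M, P) \<in> cyc_equiv n" unfolding cyc_equiv_iff using kl(1,2) by blast
  qed
qed

lemma class_card_le:
  assumes C: "C \<in> chord_sets n // cyc_equiv n"
  shows "card C \<le> 2*n" "finite C"
proof -
  obtain M where M: "M \<in> chord_sets n" "C = cyc_equiv n `` {M}" using C unfolding quotient_def by blast
  then have "C = (\<lambda>k. RR n k M) ` {..<2*n}" using class_eq by simp
  then show "card C \<le> 2*n" "finite C" using card_image_le[of "{..<2*n}" "\<lambda>k. RR n k M"] by simp_all
qed

lemma class_bad:
  assumes C: "C \<in> chord_sets n // cyc_equiv n" and c: "card C \<noteq> 2*n"
  shows "C \<subseteq> bad n"
proof -
  obtain M where M: "M \<in> chord_sets n" "C = cyc_equiv n `` {M}" using C unfolding quotient_def by blast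
  then have CE: "C = (\<lambda>k. RR n k M) ` {..<2*n}" using class_eq by simp
  have "\<not> inj_on (\<lambda>k. RR n k M) {..<2*n}"
  proof
    assume "inj_on (\<lambda>k. RR n k M) {..<2*n}"
    then have "card ((\<lambda>k. RR n k M) ` {..<2*n}) = 2*n" by (simp add: card_image)
    then have "card C = 2*n" using CE by simp
    then show False using c by simp
  qed
  then obtain i j where ij: "i < 2*n" "j < 2*n" "i \<noteq> j" "RR n i M = RR n j M"
    unfolding inj_on_def by auto
  obtain a b where ab: "a < b" "b < 2*n" "RR n a M = RR n b M"
  proof (cases "i < j")
    case True then show ?thesis using that ij by blast
  next
    case False then show ?thesis using that[of j i] ij by auto
  qed
  define t where "t = b - a"
  have t: "0 < t" "t < 2*n" using ab unfolding t_def by auto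
  have ta: "t + a = b" using ab unfolding t_def by simp
  have fixa: "RR n t (RR n a M) = RR n a M"
    using ab(3) RR_add[where n=n and a=t and b=a and M=M] unfolding ta by simp
  show ?thesis
  proof
    fix N assume "N \<in> C"
    then obtain k where k: "N = RR n k M" using CE by blast
    have "RR n (k + 2*n) M = RR n k (RR n (2*n) M)" by (rule RR_add)
    also have "RR n (2*n) M = M" using RR_period[OF n M(1)] by simp
    finally have N1: "N = RR n (k + 2*n) M" using k by simp
    have "RR n (k + (2*n - a)) (RR n a M) = RR n (k + (2*n - a) + a) M" by (rule RR_add[symmetric])
    also have "k + (2*n - a) + a = k + 2*n" using ab by simp
    finally have N: "N = RR n (k + (2*n - a)) (RR n a M)" using N1 by simp
    have "RR n t N = RR n (k + (2*n - a)) (RR n t (RR n a M))" unfolding N by (rule RR_comm)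
    then have "RR n t N = N" using fixa N by simp
    moreover have "N \<in> chord_sets n" using k RR_cs[OF n M(1)] by simp
    ultimately show "N \<in> bad n" unfolding bad_def using t by blast
  qed
qed

lemma c_lower: "odd_dfact n \<le> 2*n * c_num n"
proof -
  let ?Q = "chord_sets n // cyc_equiv n"
  have "odd_dfact n = card (\<Union>?Q)" using Union_quotient[OF equiv_cyc] card_cs by simp
  also have "\<dots> \<le> sum card ?Q" by (rule card_Union_le_sum_card)
  also have "\<dots> \<le> sum (\<lambda>_. 2*n) ?Q" by (rule sum_mono) (rule class_card_le)
  also have "\<dots> = 2*n * c_num n" unfolding c_num_def by simp
  finally show ?thesis .
qed

lemma pw: "pairwise disjnt (chord_sets n // cyc_equiv n)"
  unfolding pairwise_def disjnt_def using quotient_disj[OF equiv_cyc] by blast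

lemma c_upper: "2*n * c_num n \<le> odd_dfact n + 2*n * card (bad n)"
proof -
  let ?Q = "chord_sets n // cyc_equiv n"
  let ?Q1 = "{C \<in> ?Q. card C = 2*n}"
  let ?Q2 = "{C \<in> ?Q. card C \<noteq> 2*n}"
  have finQ: "finite ?Q" using finite_quotient[OF finite_cs equiv_type[OF equiv_cyc]] .
  have split: "card ?Q = card ?Q1 + card ?Q2"
    using finQ by (subst card_Un_disjoint[symmetric]) (auto intro: arg_cong[where f=card])
  have "2*n * card ?Q1 = sum card ?Q1" by simp
  also have "\<dots> = card (\<Union>?Q1)"
    by (rule card_Union_disjoint[symmetric]) (auto intro: pairwise_subset[OF pw] class_card_le)
  also have "\<dots> \<le> card (chord_sets n)"
    using finite_cs Union_quotient[OF equiv_cyc] by (intro card_mono) auto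
  finally have q1: "2*n * card ?Q1 \<le> odd_dfact n" using card_cs by simp
  have "card ?Q2 = sum (\<lambda>_. 1) ?Q2" by simp
  also have "\<dots> \<le> sum card ?Q2"
  proof (rule sum_mono)
    fix C assume C: "C \<in> ?Q2"
    then have "C \<noteq> {}" "finite C" using class_card_le in_quotient_imp_non_empty[OF equiv_cyc] by auto
    then show "1 \<le> card C" by (simp add: Suc_leI card_gt_0_iff)
  qed
  also have "\<dots> = card (\<Union>?Q2)"
    by (rule card_Union_disjoint[symmetric]) (auto intro: pairwise_subset[OF pw] class_card_le)
  also have "\<dots> \<le> card (bad n)"
    using class_bad by (intro card_mono) (auto intro: finite_subset[OF _ finite_cs] simp: bad_def)
  finally have q2: "card ?Q2 \<le> card (bad n)" .
  have "2*n * c_num n = 2*n * card ?Q1 + 2*n * card ?Q2" unfolding c_num_def split by (simp add: algebra_simps)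
  also have "\<dots> \<le> odd_dfact n + 2*n * card (bad n)" using q1 mult_le_mono2[OF q2, of "2*n"] by linarith
  finally show ?thesis .
qed

end

definition Fd :: "nat \<Rightarrow> nat \<Rightarrow> nat set set set" where
  "Fd n d = {M \<in> chord_sets n. RR n d M = M}"

definition DD :: "nat \<Rightarrow> nat set" where
  "DD n = {d. 0 < d \<and> 3*d \<le> 2*n \<and> d dvd 2*n}"

context fixes n :: nat assumes n: "0 < n"
begin

lemma bad_sub: "bad n \<subseteq> Fd n n \<union> (\<Union>d\<in>DD n. Fd n d)"
proof
  fix M assume "M \<in> bad n"
  then obtain t where M: "M \<in> chord_sets n" and t: "0 < t" "t < 2*n" "RR n t M = M"
    unfolding bad_def by blast
  obtain d x y where dxy: "d dvd t" "d dvd 2*n" "t * x = 2*n*y + d"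
    using bezout_add_strong_nat[of t "2*n"] t(1) by auto
  have "RR n (t*x) M = M" using RR_iter[OF t(3)] .
  then have "RR n (d + 2*n*y) M = M" using dxy(3) by (simp add: add.commute)
  moreover have "RR n (d + 2*n*y) M = RR n d (RR n (2*n*y) M)" by (rule RR_add)
  moreover have "RR n (2*n*y) M = M" using RR_period[OF n M] by simp
  ultimately have fd: "RR n d M = M" by simp
  have d0: "0 < d" using dxy(1) t(1) by (metis dvd_0_left_iff gr0I less_numeral_extra(3))
  have dt: "d \<le> t" using dxy(1) t(1) by (simp add: dvd_imp_le)
  obtain m where m: "2*n = d * m" using dxy(2) by (auto elim: dvdE)
  have "m \<noteq> 0" using m n by (metis mult_0_right mult_is_0 neq0_conv zero_neq_numeral)
  moreover have "m \<noteq> 1" using m dt t(2) by auto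
  ultimately consider "m = 2" | "m \<ge> 3" by linarith
  then show "M \<in> Fd n n \<union> (\<Union>d\<in>DD n. Fd n d)"
  proof cases
    case 1
    then have "d = n" using m by simp
    then show ?thesis using fd M unfolding Fd_def by blast
  next
    case 2
    then have "3*d \<le> 2*n" using m by (metis mult.commute mult_le_mono2)
    then have "d \<in> DD n" using d0 dxy(2) unfolding DD_def by blast
    then show ?thesis using fd M unfolding Fd_def by blast
  qed
qed

lemma good_half: "good (rot n ^^ n) {1..2*n}"
  unfolding good_def
proof (intro ballI conjI)
  fix x assume x: "x \<in> {1..2*n}"
  show "(rot n ^^ n) x \<in> {1..2*n}" using rot_pow_in[OF n x] .
  have "(rot n ^^ n) ((rot n ^^ n) x) = (rot n ^^ (n+n)) x" by (rule rot_pow_add[symmetric])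
  also have "\<dots> = x" using rot_pow_period[OF n x, of "n+n"] by (simp add: mult_2)
  finally show "(rot n ^^ n) ((rot n ^^ n) x) = x" .
  show "(rot n ^^ n) x \<noteq> x"
  proof
    assume a: "(rot n ^^ n) x = x"
    define z where "z = x - 1"
    have z: "z < 2*n" "x = z + 1" using x unfolding z_def by auto
    have "(z + n) mod (2*n) + 1 = z + 1" using a rot_pow[OF n x, of n] z by simp
    then have "(z + n) mod (2*n) = z mod (2*n)" using z by simp
    then have "(2*n) dvd (z + n - z)" using mod_eq_dvd_iff_nat[of z "z+n" "2*n"] by simp
    then have "(2*n) dvd n" by simp
    then have "2*n \<le> n" using n by (simp add: dvd_imp_le)
    then show False using n by simp
  qed
qed

lemma Fd_half: "Fd n n = fixi (rot n ^^ n) {1..2*n}"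
  unfolding Fd_def fixi_def RR_def chord_sets_match ..

lemma card_Fd_half: "real (card (Fd n n)) \<le> 2^n * sqrt (fact n)"
  unfolding Fd_half by (rule fixi_bound[OF _ good_half]) simp_all

lemma cover:
  assumes d: "0 < d" "d \<le> 2*n" and y: "y \<in> {1..2*n}"
  shows "\<exists>q. \<exists>x\<in>{1..d}. y = (rot n ^^ (d*q)) x"
proof -
  define q where "q = (y - 1) div d"
  define x where "x = (y - 1) mod d + 1"
  have x1: "x \<in> {1..d}" unfolding x_def using d by (simp add: Suc_leI)
  then have xA: "x \<in> {1..2*n}" using d by auto
  have "(rot n ^^ (d*q)) x = (x - 1 + d*q) mod (2*n) + 1" by (rule rot_pow[OF n xA])
  also have "x - 1 + d*q = y - 1" unfolding x_def q_def by simp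
  also have "(y - 1) mod (2*n) = y - 1" using y by (intro mod_less) auto
  also have "y - 1 + 1 = y" using y by simp
  finally show ?thesis using x1 by metis
qed

lemma Fd_iter: "M \<in> Fd n d \<Longrightarrow> RR n (d*k) M = M"
  unfolding Fd_def using RR_iter by blast

lemma Fd_sub:
  assumes d: "0 < d" "d \<le> 2*n" and M: "M \<in> Fd n d" and M': "M' \<in> Fd n d"
    and eq: "\<And>x. x \<in> {1..d} \<Longrightarrow> partner M x = partner M' x"
  shows "M \<subseteq> M'"
proof
  let ?A = "{1..2*n}"
  have Mm: "M \<in> match ?A" and Mm': "M' \<in> match ?A" using M M' unfolding Fd_def chord_sets_match by auto
  fix e assume e: "e \<in> M"
  have eA: "e \<subseteq> ?A" using match_sub[OF Mm e] .
  have "card e = 2" using match_card[OF Mm e] .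
  then obtain y where ye: "y \<in> e" by (metis card.empty ex_in_conv zero_neq_numeral)
  then have yA: "y \<in> ?A" using eA by blast
  obtain q x0 where x0: "x0 \<in> {1..d}" "y = (rot n ^^ (d*q)) x0" using cover[OF d yA] by blast
  have x0A: "x0 \<in> ?A" using x0 d by auto
  define j where "j = d * (q * (2*n - 1))"
  have jdv: "(2*n) dvd (j + d*q)" "(2*n) dvd (d*q + j)"
  proof -
    have "j + d*q = d*q*(Suc (2*n - 1))" unfolding j_def by (simp add: algebra_simps)
    also have "Suc (2*n - 1) = 2*n" using n by simp
    finally show "(2*n) dvd (j + d*q)" by simp
    then show "(2*n) dvd (d*q + j)" by (simp add: add.commute)
  qed
  define e' where "e' = (rot n ^^ j) ` e"
  have "e' \<in> RR n j M" unfolding e'_def RR_def using e by blast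
  then have e'M: "e' \<in> M" using Fd_iter[OF M, of "q * (2*n - 1)"] unfolding j_def by simp
  have "(rot n ^^ j) y = (rot n ^^ (j + d*q)) x0" unfolding x0(2) by (rule rot_pow_add[symmetric])
  also have "\<dots> = x0" using rot_pow_period[OF n x0A jdv(1)] .
  finally have "x0 \<in> e'" unfolding e'_def using ye by (metis image_eqI)
  have p: "{x0, partner M x0} \<in> M" using partner_ex[OF Mm x0A] by blast
  have "e' = {x0, partner M x0}"
  proof (rule ccontr)
    assume "e' \<noteq> {x0, partner M x0}"
    then have "e' \<inter> {x0, partner M x0} = {}" using match_disj[OF Mm e'M p] by blast
    then show False using \<open>x0 \<in> e'\<close> by blast
  qed
  also have "\<dots> = {x0, partner M' x0}" using eq x0(1) by simp
  finally have e'M': "e' \<in> M'" using partner_ex[OF Mm' x0A] by simp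
  have "(rot n ^^ (d*q)) ` e' = e"
  proof -
    have "(rot n ^^ (d*q)) ` e' = (\<lambda>z. (rot n ^^ (d*q)) ((rot n ^^ j) z)) ` e" unfolding e'_def by (simp add: image_image)
    also have "\<dots> = (\<lambda>z. z) ` e"
    proof (rule image_cong[OF refl])
      fix z assume "z \<in> e"
      then have zA: "z \<in> ?A" using eA by blast
      have "(rot n ^^ (d*q)) ((rot n ^^ j) z) = (rot n ^^ (d*q + j)) z" by (rule rot_pow_add[symmetric])
      also have "\<dots> = z" using rot_pow_period[OF n zA jdv(2)] .
      finally show "(rot n ^^ (d*q)) ((rot n ^^ j) z) = z" .
    qed
    finally show ?thesis by simp
  qed
  then have "e \<in> RR n (d*q) M'" unfolding RR_def using e'M' by blast
  then show "e \<in> M'" using Fd_iter[OF M'] by simp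
qed

lemma card_Fd:
  assumes d: "0 < d" "d \<le> 2*n"
  shows "card (Fd n d) \<le> (2*n)^d"
proof -
  let ?A = "{1..2*n}"
  let ?phi = "\<lambda>M. (\<lambda>x\<in>{1..d}. partner M x)"
  have inj: "inj_on ?phi (Fd n d)"
  proof (rule inj_onI)
    fix M M' assume a: "M \<in> Fd n d" "M' \<in> Fd n d" "?phi M = ?phi M'"
    have eq: "partner M x = partner M' x" if "x \<in> {1..d}" for x
      using fun_cong[OF a(3), of x] that by simp
    show "M = M'" using Fd_sub[OF d a(1) a(2) eq] Fd_sub[OF d a(2) a(1) eq[symmetric]] by blast
  qed
  have img: "?phi ` Fd n d \<subseteq> PiE {1..d} (\<lambda>_. ?A)"
  proof
    fix f assume "f \<in> ?phi ` Fd n d"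
    then obtain M where M: "M \<in> Fd n d" "f = ?phi M" by blast
    have Mm: "M \<in> match ?A" using M unfolding Fd_def chord_sets_match by auto
    have "partner M x \<in> ?A" if "x \<in> {1..d}" for x
      using partner_ex[OF Mm, of x] that d by auto
    then show "f \<in> PiE {1..d} (\<lambda>_. ?A)" using M(2) by auto
  qed
  have "card (Fd n d) = card (?phi ` Fd n d)" using card_image[OF inj] by simp
  also have "\<dots> \<le> card (PiE {1..d} (\<lambda>_. ?A))" by (rule card_mono[OF _ img]) (simp add: finite_PiE)
  also have "\<dots> = (2*n)^d" by (simp add: card_PiE)
  finally show ?thesis .
qed

end

lemma ratio_zero:
  fixes f :: "nat \<Rightarrow> real"
  assumes "\<And>n. n \<ge> N \<Longrightarrow> 0 \<le> f n \<and> f (Suc n) \<le> 1/2 * f n"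
  shows "f \<longlonglongrightarrow> 0"
proof -
  have "summable f"
  proof (rule summable_ratio_test[of "1/2" N])
    fix n assume n: "n \<ge> N"
    have "0 \<le> f n" "f (Suc n) \<le> 1/2 * f n" "0 \<le> f (Suc n)" using assms[OF n] assms[of "Suc n"] n by auto
    then show "norm (f (Suc n)) \<le> 1/2 * norm (f n)" by simp
  qed simp
  then show ?thesis by (rule summable_LIMSEQ_zero)
qed

lemma root_squeeze:
  fixes t b :: "nat \<Rightarrow> real"
  assumes k: "0 < k" and ev: "eventually (\<lambda>n. 0 \<le> t n \<and> t n ^ k \<le> b n) sequentially"
    and b: "b \<longlonglongrightarrow> 0"
  shows "t \<longlonglongrightarrow> 0"
proof (rule real_tendsto_sandwich[of "\<lambda>_. 0" t _ "\<lambda>n. root k (b n)"])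
  show "eventually (\<lambda>n. 0 \<le> t n) sequentially" using ev by (rule eventually_mono) simp
  show "eventually (\<lambda>n. t n \<le> root k (b n)) sequentially"
  proof (rule eventually_mono[OF ev])
    fix n assume a: "0 \<le> t n \<and> t n ^ k \<le> b n"
    have "t n = root k (t n ^ k)" using real_root_power_cancel[OF k] a by simp
    also have "\<dots> \<le> root k (b n)" using a k by simp
    finally show "t n \<le> root k (b n)" .
  qed
  show "(\<lambda>_. 0) \<longlonglongrightarrow> (0::real)" by simp
  have "(\<lambda>n. root k (b n)) \<longlonglongrightarrow> root k 0" by (rule tendsto_real_root[OF b])
  then show "(\<lambda>n. root k (b n)) \<longlonglongrightarrow> 0" by simp
qed

lemma b1_zero: "(\<lambda>n. 4 * real n ^ 2 * 4 ^ n / fact n) \<longlonglongrightarrow> (0::real)"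
proof (rule ratio_zero[of 9])
  fix n :: nat assume n: "n \<ge> 9"
  define g where "g = (4::real) ^ n / fact n"
  have g0: "g \<ge> 0" unfolding g_def by simp
  define a where "a = real n + 1"
  have a0: "a \<noteq> 0" unfolding a_def by simp
  have f0: "(fact n :: real) \<noteq> 0" by simp
  have fs: "(fact (Suc n) :: real) = a * fact n" unfolding a_def by (simp add: fact_Suc)
  have rs: "real (Suc n) = a" unfolding a_def by simp
  have "4 * a ^ 2 * (4 * 4 ^ n) / (a * fact n) = (16 * a) * ((4::real) ^ n / fact n)"
    using a0 f0 by (simp add: field_simps power2_eq_square)
  then have e1: "4 * real (Suc n) ^ 2 * 4 ^ Suc n / fact (Suc n) = (16 * (real n + 1)) * g"
    unfolding g_def fs rs by (simp add: a_def)
  have e2: "1/2 * (4 * real n ^ 2 * 4 ^ n / fact n) = (2 * real n * real n) * g"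
    unfolding g_def by (simp add: power2_eq_square field_simps)
  define m where "m = real n"
  have m9: "m \<ge> 9" using n unfolding m_def by simp
  have "m * 9 \<le> m * m" using m9 by (intro mult_left_mono) auto
  then have h1: "18 * m \<le> 2 * (m * m)" by simp
  have h2: "16 * (m + 1) \<le> 18 * m" using m9 by simp
  have "16 * (m + 1) \<le> 2 * (m * m)" using h1 h2 by (rule order_trans[rotated])
  then have "16 * (real n + 1) \<le> 2 * (real n * real n)" unfolding m_def .
  then have "16 * (real n + 1) \<le> 2 * real n * real n" by (simp add: mult.assoc)
  then have "(16 * (real n + 1)) * g \<le> (2 * real n * real n) * g" using g0 by (rule mult_right_mono)
  then show "0 \<le> 4 * real n ^ 2 * 4 ^ n / fact n \<and>
    4 * real (Suc n) ^ 2 * 4 ^ Suc n / fact (Suc n) \<le> 1/2 * (4 * real n ^ 2 * 4 ^ n / fact n)"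
    unfolding e1 e2 by simp
qed

lemma pow_bound: assumes n: "n \<ge> 1" shows "(real n + 1) ^ (2*n) \<le> 9 * real n ^ (2*n)"
proof -
  have "(1 + 1 / real n) ^ n \<le> exp 1" by (rule exp_ge_one_plus_x_over_n_power_n) (use n in auto)
  also have "\<dots> \<le> 3" by (rule exp_le)
  finally have a: "(1 + 1 / real n) ^ n \<le> 3" .
  have "(1 + 1 / real n) ^ (2*n) = ((1 + 1 / real n) ^ n)^2" by (simp add: power_mult mult.commute)
  also have "\<dots> \<le> 3^2" using a by (intro power_mono) auto
  finally have b: "(1 + 1 / real n) ^ (2*n) \<le> 9" by simp
  have "(real n + 1) ^ (2*n) = (1 + 1 / real n) ^ (2*n) * real n ^ (2*n)"
  proof -
    have "real n + 1 = (1 + 1 / real n) * real n" using n by (simp add: field_simps)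
    then show ?thesis by (metis power_mult_distrib)
  qed
  also have "\<dots> \<le> 9 * real n ^ (2*n)" using b by (intro mult_right_mono) auto
  finally show ?thesis .
qed

lemma alg1:
  fixes a f X :: real
  assumes "a \<noteq> 0" "f \<noteq> 0"
  shows "8 * a^6 * (X * (4*a^2)) / (a*f)^3 = 32 * a^5 * (X / f^3)"
proof -
  have h1: "8 * a^6 * (X * (4*a^2)) = (32 * a^5 * X) * a^3" by (simp add: eval_nat_numeral)
  have h2: "(a*f)^3 = f^3 * a^3" by (simp add: power_mult_distrib)
  have "8 * a^6 * (X * (4*a^2)) / (a*f)^3 = (32 * a^5 * X) * a^3 / (f^3 * a^3)" by (simp only: h1 h2)
  also have "\<dots> = (32 * a^5 * X) / f^3" using assms by (intro nonzero_mult_divide_mult_cancel_right) simp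
  finally show ?thesis by simp
qed

lemma b2_zero: "(\<lambda>n. 8 * real n ^ 6 * (2 * real n) ^ (2*n) / (fact n) ^ 3) \<longlonglongrightarrow> (0::real)"
proof (rule ratio_zero[of 2304])
  fix n :: nat assume n: "n \<ge> 2304"
  define g where "g = (2 * real n) ^ (2*n) / (fact n) ^ 3"
  have g0: "g \<ge> 0" unfolding g_def by simp
  have "(2 * (real n + 1)) ^ (2*n) = 2^(2*n) * (real n + 1)^(2*n)" by (rule power_mult_distrib)
  also have "\<dots> \<le> 2^(2*n) * (9 * real n ^ (2*n))" using pow_bound[of n] n by (intro mult_left_mono) auto
  also have "\<dots> = 9 * (2 * real n) ^ (2*n)" by (simp add: power_mult_distrib)
  finally have p: "(2 * (real n + 1)) ^ (2*n) \<le> 9 * (2 * real n) ^ (2*n)" .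
  define a where "a = real n + 1"
  have a0: "a \<noteq> 0" unfolding a_def by simp
  have f0: "(fact n :: real) \<noteq> 0" by simp
  have fs: "(fact (Suc n) :: real) = a * fact n" unfolding a_def by (simp add: fact_Suc)
  have rs: "real (Suc n) = a" unfolding a_def by simp
  have pw: "(2*a)^(2 * Suc n) = (2*a)^(2*n) * (4*a^2)"
    by (simp add: power_add power_mult_distrib eval_nat_numeral)
  have e1: "8 * real (Suc n) ^ 6 * (2 * real (Suc n)) ^ (2 * Suc n) / (fact (Suc n)) ^ 3
      = 32 * (real n + 1)^5 * ((2 * (real n + 1)) ^ (2*n) / (fact n) ^ 3)"
    unfolding rs fs pw using alg1[OF a0 f0] by (simp add: a_def)
  have "(2 * (real n + 1)) ^ (2*n) / (fact n) ^ 3 \<le> 9 * g"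
    unfolding g_def using p by (simp add: divide_right_mono)
  then have le1: "8 * real (Suc n) ^ 6 * (2 * real (Suc n)) ^ (2 * Suc n) / (fact (Suc n)) ^ 3
      \<le> 32 * (real n + 1)^5 * (9 * g)" unfolding e1 by (intro mult_left_mono) auto
  have e2: "1/2 * (8 * real n ^ 6 * (2 * real n) ^ (2*n) / (fact n) ^ 3) = (4 * real n ^ 6) * g"
    unfolding g_def by simp
  have "(real n + 1)^5 \<le> (2 * real n)^5" using n by (intro power_mono) auto
  then have "(real n + 1)^5 \<le> 32 * real n^5" by (simp add: power_mult_distrib)
  moreover have "2304 * real n ^ 5 \<le> real n * real n ^ 5" using n by (intro mult_right_mono) auto
  moreover have "real n ^ 6 = real n * real n ^ 5" by (simp add: eval_nat_numeral)
  ultimately have "288 * (real n + 1)^5 \<le> 4 * real n ^ 6" by linarith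
  then have m: "(288 * (real n + 1)^5) * g \<le> (4 * real n ^ 6) * g" using g0 by (rule mult_right_mono)
  have eq3: "32 * (real n + 1)^5 * (9 * g) = (288 * (real n + 1)^5) * g" by simp
  have le3: "8 * real (Suc n) ^ 6 * (2 * real (Suc n)) ^ (2 * Suc n) / (fact (Suc n)) ^ 3
      \<le> (4 * real n ^ 6) * g" using order_trans[OF le1[unfolded eq3] m] .
  show "0 \<le> 8 * real n ^ 6 * (2 * real n) ^ (2*n) / (fact n) ^ 3 \<and>
     8 * real (Suc n) ^ 6 * (2 * real (Suc n)) ^ (2 * Suc n) / (fact (Suc n)) ^ 3
      \<le> 1/2 * (8 * real n ^ 6 * (2 * real n) ^ (2*n) / (fact n) ^ 3)"
    unfolding e2 using le3 by simp
qed

lemma odd_ge_fact: "(fact n :: real) \<le> real (odd_dfact n)"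
proof -
  have "(\<Prod>{1..n}) \<le> odd_dfact n" unfolding odd_dfact_def
    by (rule prod_mono) auto
  then show ?thesis unfolding fact_prod by (simp only: of_nat_le_iff)
qed

lemma odd_pos: "0 < odd_dfact n"
  unfolding odd_dfact_def by (rule prod_pos) auto

lemma card_bad_nat:
  assumes n: "0 < n"
  shows "card (bad n) \<le> card (Fd n n) + n * (2*n)^(2*n div 3)"
proof -
  let ?U = "(2*n)^(2*n div 3)"
  have "Fd n d \<subseteq> chord_sets n" for d unfolding Fd_def by blast
  then have finF: "finite (Fd n d)" for d using finite_subset finite_cs by blast
  have "DD n \<subseteq> {..2*n}"
  proof
    fix d assume "d \<in> DD n"
    then have "d dvd 2*n" unfolding DD_def by blast
    then have "d \<le> 2*n" using n by (intro dvd_imp_le) auto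
    then show "d \<in> {..2*n}" by simp
  qed
  then have finD: "finite (DD n)" using finite_subset by blast
  have finU: "finite (Fd n n \<union> (\<Union>d\<in>DD n. Fd n d))" using finF finD by blast
  have "card (bad n) \<le> card (Fd n n \<union> (\<Union>d\<in>DD n. Fd n d))"
    using card_mono[OF finU bad_sub[OF n]] .
  also have "\<dots> \<le> card (Fd n n) + card (\<Union>d\<in>DD n. Fd n d)" by (rule card_Un_le)
  also have "card (\<Union>d\<in>DD n. Fd n d) \<le> (\<Sum>d\<in>DD n. card (Fd n d))" using finD by (rule card_UN_le)
  also have "\<dots> \<le> (\<Sum>d\<in>DD n. ?U)"
  proof (rule sum_mono)
    fix d assume d: "d \<in> DD n"
    then have d0: "0 < d" and d3: "3*d \<le> 2*n" unfolding DD_def by auto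
    have "card (Fd n d) \<le> (2*n)^d" using card_Fd[OF n d0] d3 by simp
    also have "\<dots> \<le> ?U" using d3 n by (intro power_increasing) auto
    finally show "card (Fd n d) \<le> ?U" .
  qed
  also have "\<dots> = card (DD n) * ?U" by simp
  also have "card (DD n) \<le> n"
  proof -
    have "DD n \<subseteq> {1..n}" unfolding DD_def by auto
    then show ?thesis using card_mono[of "{1..n}" "DD n"] by simp
  qed
  finally show ?thesis by simp
qed

lemma card_bad:
  assumes n: "0 < n"
  shows "real (card (bad n)) \<le> 2^n * sqrt (fact n) + real n * (2 * real n)^(2*n div 3)"
proof -
  have "real (card (bad n)) \<le> real (card (Fd n n)) + real n * (2 * real n)^(2*n div 3)"
    using of_nat_mono[OF card_bad_nat[OF n], where 'a=real] by simp
  then show ?thesis using card_Fd_half[OF n] by linarith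
qed

lemma e1_zero: "(\<lambda>n. 2 * real n * 2^n * sqrt (fact n) / fact n) \<longlonglongrightarrow> (0::real)"
proof (rule root_squeeze[of 2 _ "\<lambda>n. 4 * real n ^ 2 * 4 ^ n / fact n"])
  show "eventually (\<lambda>n. 0 \<le> 2 * real n * 2^n * sqrt (fact n) / fact n \<and>
      (2 * real n * 2^n * sqrt (fact n) / fact n) ^ 2 \<le> 4 * real n ^ 2 * 4 ^ n / fact n) sequentially"
  proof (rule always_eventually, intro allI conjI)
    fix n :: nat
    show "0 \<le> 2 * real n * 2^n * sqrt (fact n) / fact n" by simp
    define f where "f = (fact n :: real)"
    have f0: "f > 0" unfolding f_def by simp
    have s2: "sqrt f ^ 2 = f" using f0 by simp
    have p4: "(4::real)^n = 2^n * 2^n" by (simp add: power_mult_distrib[symmetric])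
    have "(2 * real n * 2^n * sqrt f / f) ^ 2 = (2 * real n * 2^n)^2 * (sqrt f)^2 / f^2"
      by (simp add: power_divide power_mult_distrib)
    also have "\<dots> = (2 * real n * 2^n)^2 / f" unfolding s2 using f0 by (simp add: power2_eq_square)
    also have "\<dots> = 4 * real n ^ 2 * 4 ^ n / f" unfolding p4 by (simp add: power2_eq_square)
    finally show "(2 * real n * 2^n * sqrt (fact n) / fact n) ^ 2 \<le> 4 * real n ^ 2 * 4 ^ n / fact n"
      unfolding f_def by simp
  qed
qed (simp_all add: b1_zero)

lemma e2_zero: "(\<lambda>n. 2 * real n * real n * (2 * real n)^(2*n div 3) / fact n) \<longlonglongrightarrow> (0::real)"
proof (rule root_squeeze[of 3 _ "\<lambda>n. 8 * real n ^ 6 * (2 * real n) ^ (2*n) / (fact n) ^ 3", OF _ _ b2_zero])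
  show "eventually (\<lambda>n. 0 \<le> 2 * real n * real n * (2 * real n)^(2*n div 3) / fact n \<and>
      (2 * real n * real n * (2 * real n)^(2*n div 3) / fact n) ^ 3
        \<le> 8 * real n ^ 6 * (2 * real n) ^ (2*n) / (fact n) ^ 3) sequentially"
  proof (rule eventually_sequentiallyI[of 1], intro conjI)
    fix n :: nat assume n: "1 \<le> n"
    show "0 \<le> 2 * real n * real n * (2 * real n)^(2*n div 3) / fact n" by simp
    define U where "U = (2 * real n)^(2*n div 3)"
    have U3: "U ^ 3 \<le> (2 * real n) ^ (2*n)"
    proof -
      have "U ^ 3 = (2 * real n) ^ ((2*n div 3) * 3)" unfolding U_def by (simp add: power_mult)
      also have "\<dots> \<le> (2 * real n) ^ (2*n)"
        using n by (intro power_increasing) auto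
      finally show ?thesis .
    qed
    have "(2 * real n * real n * U / fact n) ^ 3 = 8 * real n ^ 6 * U^3 / (fact n)^3"
      by (simp add: power_divide power_mult_distrib eval_nat_numeral)
    also have "\<dots> \<le> 8 * real n ^ 6 * (2 * real n) ^ (2*n) / (fact n)^3"
      using U3 by (intro divide_right_mono mult_left_mono) auto
    finally show "(2 * real n * real n * (2 * real n)^(2*n div 3) / fact n) ^ 3
        \<le> 8 * real n ^ 6 * (2 * real n) ^ (2*n) / (fact n) ^ 3" unfolding U_def .
  qed
qed simp

theorem corollary1:
  shows "(\<forall>n\<ge>1. real (c_num n) \<ge> real (odd_dfact n) / (2 * real n))
       \<and> (\<lambda>n. real (c_num n)) \<sim>[at_top] (\<lambda>n. real (odd_dfact n) / (2 * real n))"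
proof
  have low: "real (odd_dfact n) / (2 * real n) \<le> real (c_num n)" if n: "n \<ge> 1" for n
  proof -
    have "real (odd_dfact n) \<le> 2 * real n * real (c_num n)"
      using of_nat_mono[OF c_lower[of n], where 'a=real] n by simp
    then show ?thesis using n by (simp add: divide_le_eq mult.commute)
  qed
  then show "\<forall>n\<ge>1. real (c_num n) \<ge> real (odd_dfact n) / (2 * real n)" by blast
  define q where "q = (\<lambda>n. real (c_num n) / (real (odd_dfact n) / (2 * real n)))"
  define e where "e = (\<lambda>n. 2 * real n * 2^n * sqrt (fact n) / fact n
                          + 2 * real n * real n * (2 * real n)^(2*n div 3) / fact n)"
  have e0: "e \<longlonglongrightarrow> 0" unfolding e_def using tendsto_add[OF e1_zero e2_zero] by simp
  have "q \<longlonglongrightarrow> 1"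
  proof (rule real_tendsto_sandwich[of "\<lambda>_. 1" q _ "\<lambda>n. 1 + e n"])
    show "eventually (\<lambda>n. 1 \<le> q n) sequentially"
    proof (rule eventually_sequentiallyI[of 1])
      fix n :: nat assume n: "1 \<le> n"
      have N0: "0 < real (odd_dfact n) / (2 * real n)" using odd_pos[of n] n by simp
      show "1 \<le> q n" unfolding q_def using low[OF n] N0 by (simp only: le_divide_eq_1_pos)
    qed
    show "eventually (\<lambda>n. q n \<le> 1 + e n) sequentially"
    proof (rule eventually_sequentiallyI[of 1])
      fix n :: nat assume n: "1 \<le> n"
      then have n0: "0 < n" by simp
      define N where "N = real (odd_dfact n)"
      define f where "f = (fact n :: real)"
      define B where "B = real (card (bad n))"
      have Npos: "0 < N" unfolding N_def using odd_pos[of n] by simp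
      have fpos: "0 < f" unfolding f_def by simp
      have fN: "f \<le> N" unfolding f_def N_def by (rule odd_ge_fact)
      have B0: "0 \<le> B" unfolding B_def by simp
      have up: "2 * real n * real (c_num n) \<le> N + 2 * real n * B"
        using of_nat_mono[OF c_upper[OF n0], where 'a=real] unfolding N_def B_def by simp
      have "q n = 2 * real n * real (c_num n) / N" unfolding q_def N_def using n by simp
      also have "\<dots> \<le> (N + 2 * real n * B) / N" using up Npos by (intro divide_right_mono) auto
      also have "\<dots> = 1 + 2 * real n * B / N" using Npos by (simp add: field_simps)
      also have "2 * real n * B / N \<le> 2 * real n * B / f"
        using fN fpos B0 by (intro divide_left_mono) auto
      also have "2 * real n * B / f \<le> 2 * real n * (2^n * sqrt f + real n * (2 * real n)^(2*n div 3)) / f"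
        using card_bad[OF n0] fpos unfolding B_def f_def by (intro divide_right_mono mult_left_mono) auto
      also have "\<dots> = e n" unfolding e_def f_def by (simp add: field_simps)
      finally show "q n \<le> 1 + e n" by simp
    qed
    show "(\<lambda>_. 1) \<longlonglongrightarrow> (1::real)" by simp
    show "(\<lambda>n. 1 + e n) \<longlonglongrightarrow> 1" using tendsto_add[OF tendsto_const e0, of 1] by simp
  qed
  then show "(\<lambda>n. real (c_num n)) \<sim>[at_top] (\<lambda>n. real (odd_dfact n) / (2 * real n))"
    unfolding q_def by (intro asymp_equivI') simp
qed


end
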